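(* Let $P(z)=\sum_{j=0}^{n}a_jz^j$ be a complex polynomial of degree $n\ge 1$ (so $a_n\neq 0$), and let $a,b,c,u,v,w$ be arbitrary positive real numbers. Then every zero $z$ of $P$ satisfies $r_1\le |z|\le r_2$, where $$r_1=\frac{uv+2w}{uvw+w^2}\,\min_{1\le k\le n}\left\{\frac{(uvw+w^2)^n\,u^{\xi(k)}\,(uv)^{\lfloor k/2\rfloor}\,F_k^{(u,v,w)}\binom{n}{k}}{F_{4n}^{(u,v,w)}}\left|\frac{a_0}{a_k}\right|\right\}^{1/k},$$ $$r_2=\frac{abc+c^2}{ab+2c}\,\max_{1\le k\le n}\left\{\frac{F_{4n}^{(a,b,c)}}{(abc+c^2)^n\,a^{\xi(k)}\,(ab)^{\lfloor k/2\rfloor}\,F_k^{(a,b,c)}\binom{n}{k}}\left|\frac{a_{n-k}}{a_n}\right|\right\}^{1/k}.$$ (In the minimum defining $r_1$, indices $k$ with $a_k=0$ are omitted; since $a_n\neq0$ the minimum is over a nonempty set. In particular $r_1=0$ if $a_0=0$.)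
   Context: For positive real numbers $a,b,c$, the generalized Fibonacci numbers $F_m^{(a,b,c)}$ are defined by $F_0^{(a,b,c)}=0$, $F_1^{(a,b,c)}=1$, and for $m\ge 2$: $F_m^{(a,b,c)}=a\,F_{m-1}^{(a,b,c)}+c\,F_{m-2}^{(a,b,c)}$ if $m$ is even, and $F_m^{(a,b,c)}=b\,F_{m-1}^{(a,b,c)}+c\,F_{m-2}^{(a,b,c)}$ if $m$ is odd. For an integer $k$, $\lfloor k/2\rfloor$ denotes the floor of $k/2$ and $\xi(k):=k-2\lfloor k/2\rfloor$ (i.e. $0$ if $k$ is even, $1$ if $k$ is odd). *)

theory Defs
  imports Complex_Main "HOL-Computational_Algebra.Polynomial"
begin

fun gfib :: "real \<Rightarrow> real \<Rightarrow> real \<Rightarrow> nat \<Rightarrow> real" where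
  "gfib a b c 0 = 0"
| "gfib a b c (Suc 0) = 1"
| "gfib a b c (Suc (Suc m)) =
     (if even (Suc (Suc m)) then a else b) * gfib a b c (Suc m) + c * gfib a b c m"

definition xi :: "nat \<Rightarrow> nat" where
  "xi k = k - 2 * (k div 2)"

end

theory Submission
  imports Defs
begin


definition GG :: "real \<Rightarrow> real \<Rightarrow> real \<Rightarrow> nat \<Rightarrow> real" where
  "GG a b c k = a ^ xi k * (a*b)^(k div 2) * gfib a b c k"

lemma GG_rec: "GG a b c (Suc (Suc m)) = a*b*GG a b c (Suc m) + a*b*c*GG a b c m"
proof (cases "even m")
  case True
  then obtain j where m: "m = 2*j" by (rule evenE)
  have x: "xi (Suc(Suc(2*j))) = 0" "xi (Suc (2*j)) = 1" "xi (2*j) = 0"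
    by (simp_all add: xi_def)
  have d: "Suc(Suc(2*j)) div 2 = Suc j" "Suc(2*j) div 2 = j" "2*j div 2 = j" by simp_all
  show ?thesis unfolding GG_def m x d by (simp add: algebra_simps)
next
  case False
  then obtain j where m: "m = Suc (2*j)" by (metis oddE Suc_eq_plus1)
  have x: "xi (Suc(Suc(Suc(2*j)))) = 1" "xi (Suc(Suc (2*j))) = 0" "xi (Suc(2*j)) = 1"
    by (simp_all add: xi_def)
  have d: "Suc(Suc(Suc(2*j))) div 2 = Suc j" "Suc(Suc(2*j)) div 2 = Suc j" "Suc(2*j) div 2 = j" by simp_all
  show ?thesis unfolding GG_def m x d by (simp add: algebra_simps)
qed

lemma pow_step: "((x::real)+y)*(x^(Suc m)-y^(Suc m)) - x*y*(x^m-y^m) = x^(Suc (Suc m))-y^(Suc(Suc m))"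
  by (simp add: algebra_simps)

lemma GG_closed:
  assumes "al + be = a*b" "al*be = -(a*b*c)"
  shows "GG a b c m * (al - be) = a*(al^m - be^m)"
proof -
  have "GG a b c m * (al - be) = a*(al^m - be^m) \<and> GG a b c (Suc m) * (al - be) = a*(al^Suc m - be^Suc m)"
  proof (induction m)
    case 0
    then show ?case by (simp add: GG_def xi_def)
  next
    case (Suc m)
    have "GG a b c (Suc (Suc m)) * (al - be) = a*b*(GG a b c (Suc m)*(al-be)) + a*b*c*(GG a b c m*(al-be))"
      by (simp add: GG_rec algebra_simps)
    also have "\<dots> = a*b*(a*(al^Suc m - be^Suc m)) + a*b*c*(a*(al^m-be^m))"
      using Suc.IH by simp
    also have "\<dots> = a*((al+be)*(al^(Suc m)-be^(Suc m)) - al*be*(al^m-be^m))"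
    proof -
      have e1: "a*b = al+be" and e2: "a*b*c = -(al*be)" using assms by simp_all
      show ?thesis unfolding e2 unfolding e1 by (simp add: algebra_simps)
    qed
    also have "\<dots> = a*(al^Suc (Suc m) - be^Suc(Suc m))" by (simp only: pow_step)
    finally show ?case using Suc by simp
  qed
  thus ?thesis by blast
qed

lemma key_identity:
  assumes "a > 0" "b > 0" "c > 0"
  shows "(\<Sum>k\<in>{1..n}. real (n choose k) * GG a b c k * (a*b+2*c)^k * (a*b*c+c^2)^(n-k))
         = gfib a b c (4*n)"
proof -
  define s where "s = a*b"
  define t where "t = a*b*c"
  define p where "p = a*b+2*c"
  define q where "q = a*b*c+c^2"
  define d where "d = sqrt (s^2 + 4*t)"
  define al where "al = (s + d)/2"
  define be where "be = (s - d)/2"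
  have spos: "s > 0" using assms by (simp add: s_def)
  have tpos: "t > 0" using assms by (simp add: t_def)
  have pp: "0 < s^2 + 4*t" using spos tpos by (simp add: add_pos_pos)
  have d2: "d^2 = s^2 + 4*t" unfolding d_def using pp by simp
  have dpos: "d > 0" unfolding d_def using pp by simp
  have sum: "al + be = a*b" by (simp add: al_def be_def s_def field_simps)
  have prod: "al*be = -(a*b*c)"
  proof -
    have "al*be = (s+d)*(s-d)/4" by (simp add: al_def be_def)
    also have "(s+d)*(s-d) = s^2 - d^2" by (simp add: power2_eq_square algebra_simps)
    finally show ?thesis using d2 by (simp add: t_def)
  qed
  have ne: "al - be \<noteq> 0" using dpos by (simp add: al_def be_def)
  have sq: "x^2 = s*x + t" if "x = al \<or> x = be" for x
  proof -
    have "x^2 = (al+be)*x - al*be" using that by (auto simp: power2_eq_square algebra_simps)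
    thus ?thesis using sum prod by (simp add: s_def t_def)
  qed
  have four: "x^4 = s^2 * (p*x + q)" if "x = al \<or> x = be" for x
  proof -
    have "x^4 = (x^2)^2" by simp
    also have "\<dots> = (s*x+t)^2" using sq that by simp
    also have "\<dots> = s^2*x^2 + 2*s*t*x + t^2" by (simp add: power2_eq_square algebra_simps)
    also have "\<dots> = s^2*(s*x+t) + 2*s*t*x + t^2" using sq that by simp
    also have "\<dots> = s^2 * (p*x + q)" by (simp add: s_def t_def p_def q_def power2_eq_square algebra_simps)
    finally show ?thesis .
  qed
  have pw: "x^(4*n) = s^(2*n) * (p*x+q)^n" if "x = al \<or> x = be" for x
    by (simp add: power_mult four[OF that] power_mult_distrib)
  have g4: "GG a b c (4*n) = s^(2*n) * gfib a b c (4*n)"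
    by (simp add: GG_def xi_def s_def)
  have "s^(2*n) * gfib a b c (4*n) * (al - be) = s^(2*n) * (a*((p*al+q)^n - (p*be+q)^n))"
    using GG_closed[OF sum prod, of "4*n"] g4 pw by (simp add: algebra_simps)
  hence A: "gfib a b c (4*n) * (al - be) = a*((p*al+q)^n - (p*be+q)^n)"
    using spos by simp
  also have "\<dots> = (\<Sum>k\<le>n. real (n choose k) * p^k * q^(n-k) * (a*(al^k - be^k)))"
  proof -
    have bx: "(p*x+q)^n = (\<Sum>k\<le>n. real(n choose k) * p^k * q^(n-k) * x^k)" for x
      by (simp add: binomial_ring power_mult_distrib mult_ac)
    have "a*((p*al+q)^n - (p*be+q)^n) = (\<Sum>k\<le>n. a*(real(n choose k) * p^k * q^(n-k) * al^k) - a*(real(n choose k) * p^k * q^(n-k) * be^k))"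
      unfolding bx by (simp add: sum_subtractf sum_distrib_left right_diff_distrib)
    also have "\<dots> = (\<Sum>k\<le>n. real (n choose k) * p^k * q^(n-k) * (a*(al^k - be^k)))"
      by (rule sum.cong) (simp_all add: algebra_simps)
    finally show ?thesis .
  qed
  also have "\<dots> = (\<Sum>k\<le>n. real (n choose k) * GG a b c k * p^k * q^(n-k)) * (al - be)"
    unfolding sum_distrib_right
    by (rule sum.cong) (simp_all add: GG_closed[OF sum prod, symmetric] mult_ac)
  finally have "gfib a b c (4*n) = (\<Sum>k\<le>n. real (n choose k) * GG a b c k * p^k * q^(n-k))"
    using ne by simp
  also have "\<dots> = (\<Sum>k\<in>{1..n}. real (n choose k) * GG a b c k * p^k * q^(n-k))"
  proof -
    have "{..n} = insert 0 {1..n}" by auto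
    hence "(\<Sum>k\<le>n. real (n choose k) * GG a b c k * p^k * q^(n-k)) = real (n choose 0) * GG a b c 0 * p^0 * q^(n-0) + (\<Sum>k\<in>{1..n}. real (n choose k) * GG a b c k * p^k * q^(n-k))"
      by (simp only: sum.insert finite_atLeastAtMost) simp
    thus ?thesis by (simp add: GG_def)
  qed
  finally show ?thesis unfolding p_def q_def by (rule sym)
qed



lemma gfib_pos:
  assumes "a > 0" "b > 0" "c > 0" "k \<ge> 1"
  shows "gfib a b c k > 0"
proof -
  have "gfib a b c (Suc k) > 0 \<and> gfib a b c (Suc (Suc k)) > 0" for k
  proof (induction k)
    case 0
    then show ?case using assms by simp
  next
    case (Suc k)
    have co: "(if even (Suc (Suc (Suc k))) then a else b) > 0" using assms by simp
    have "gfib a b c (Suc (Suc (Suc k))) = (if even (Suc (Suc (Suc k))) then a else b) * gfib a b c (Suc (Suc k)) + c * gfib a b c (Suc k)"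
      by (simp only: gfib.simps)
    also have "\<dots> > 0" using Suc co assms by (intro add_pos_pos mult_pos_pos) auto
    finally show ?case using Suc by simp
  qed
  moreover obtain j where "k = Suc j" using assms(4) by (cases k) auto
  ultimately show ?thesis by blast
qed

lemma GG_pos:
  assumes "a > 0" "b > 0" "c > 0" "k \<ge> 1"
  shows "GG a b c k > 0"
  using gfib_pos[OF assms] assms by (simp add: GG_def)

lemma upper:
  fixes P :: "complex poly" and a b c :: real and z :: complex
  assumes "degree P \<ge> 1" "a>0" "b>0" "c>0" "poly P z = 0"
  shows "cmod z \<le>
         (a*b*c + c^2) / (a*b + 2*c) *
           Max ((\<lambda>k. root k (gfib a b c (4 * degree P) /
                   ((a*b*c + c^2) ^ degree P * a ^ xi k * (a*b) ^ (k div 2)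
                    * gfib a b c k * real (degree P choose k))
                   * cmod (coeff P (degree P - k) / coeff P (degree P))))
                ` {1..degree P})"
proof -
  define n where "n = degree P"
  define p where "p = a*b+2*c"
  define q where "q = a*b*c+c^2"
  define T where "T = q/p"
  define F4 where "F4 = gfib a b c (4*n)"
  define E where "E = (\<lambda>k. F4 / (q ^ n * a ^ xi k * (a*b) ^ (k div 2) * gfib a b c k * real (n choose k)))"
  define f where "f = (\<lambda>k. root k (E k * cmod (coeff P (n-k) / coeff P n)))"
  define M where "M = Max (f ` {1..n})"
  have E_GG: "E k = F4 / (q^n * GG a b c k * real (n choose k))" for k
    by (simp add: E_def GG_def mult.assoc)
  have n1: "n \<ge> 1" using assms(1) by (simp add: n_def)
  have P0: "P \<noteq> 0" using n1 n_def by auto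
  have An: "coeff P n \<noteq> 0" using P0 by (simp add: n_def)
  have ppos: "p > 0" and qpos: "q > 0" using assms by (simp_all add: p_def q_def add_pos_pos)
  have Tpos: "T > 0" using ppos qpos by (simp add: T_def)
  have F4pos: "F4 > 0" unfolding F4_def using n1 assms by (intro gfib_pos) auto
  have Epos: "E k > 0" if "k \<in> {1..n}" for k
    unfolding E_GG using that F4pos qpos GG_pos[OF assms(2-4), of k] by (intro divide_pos_pos mult_pos_pos) auto
  have fin: "finite (f ` {1..n})" by simp
  have fle: "f k \<le> M" if "k \<in> {1..n}" for k unfolding M_def using that fin by (intro Max_ge) auto
  have f0: "0 \<le> f k" if "k \<in> {1..n}" for k unfolding f_def using Epos[OF that] by (intro real_root_ge_zero) simp
  have M0: "0 \<le> M" using f0[of 1] fle[of 1] n1 by fastforce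
  have bnd: "cmod (coeff P (n-k)) \<le> M^k * cmod (coeff P n) / E k" if k: "k \<in> {1..n}" for k
  proof -
    define X where "X = E k * cmod (coeff P (n-k) / coeff P n)"
    have X0: "X \<ge> 0" using Epos[OF k] by (simp add: X_def)
    have "X = (f k)^k" using k X0 by (simp add: f_def X_def)
    also have "\<dots> \<le> M^k" using f0[OF k] fle[OF k] by (intro power_mono) auto
    finally have "E k * cmod (coeff P (n-k)) / cmod (coeff P n) \<le> M^k" by (simp add: X_def norm_divide)
    hence "E k * cmod (coeff P (n-k)) \<le> M^k * cmod (coeff P n)" using An by (simp add: divide_le_eq)
    thus ?thesis using Epos[OF k] by (simp add: le_divide_eq mult.commute)
  qed
  have sumone: "(\<Sum>k\<in>{1..n}. 1/(E k * T^k)) = 1"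
  proof -
    have "(\<Sum>k\<in>{1..n}. 1/(E k * T^k)) = (\<Sum>k\<in>{1..n}. real (n choose k) * GG a b c k * p^k * q^(n-k) / F4)"
    proof (rule sum.cong)
      fix k assume k: "k \<in> {1..n}"
      have qn: "q^n = q^k * q^(n-k)" using k by (simp add: power_add[symmetric])
      show "1/(E k * T^k) = real (n choose k) * GG a b c k * p^k * q^(n-k) / F4"
        unfolding E_GG T_def qn using qpos ppos F4pos by (simp add: power_divide field_simps)
    qed simp
    also have "\<dots> = 1" using key_identity[OF assms(2-4), of n] F4pos
      by (simp add: sum_divide_distrib[symmetric] p_def q_def F4_def)
    finally show ?thesis .
  qed
  have main: "cmod z \<le> T * M"
  proof (rule ccontr)
    assume "\<not> cmod z \<le> T * M"
    hence zT: "T * M < cmod z" by simp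
    have zpos: "cmod z > 0" using zT Tpos M0 by (smt (verit) mult_nonneg_nonneg)
    have MzT: "M < cmod z / T" using zT Tpos by (simp add: pos_less_divide_eq mult.commute)
    have "poly P z = (\<Sum>i\<le>n. coeff P i * z^i)" by (simp add: poly_altdef n_def)
    also have "{..n} = insert n {..<n}" by auto
    finally have "coeff P n * z^n = - (\<Sum>i<n. coeff P i * z^i)" using assms(5) by (simp add: eq_neg_iff_add_eq_0 add.commute)
    hence "cmod (coeff P n) * cmod z^n = cmod (\<Sum>i<n. coeff P i * z^i)" by (metis norm_minus_cancel norm_mult norm_power)
    also have "\<dots> \<le> (\<Sum>i<n. cmod (coeff P i) * cmod z^i)"
      by (rule order_trans[OF norm_sum]) (simp add: norm_mult norm_power)
    also have "\<dots> = (\<Sum>k\<in>{1..n}. cmod (coeff P (n-k)) * cmod z^(n-k))"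
      by (rule sum.reindex_bij_witness[of _ "\<lambda>k. n-k" "\<lambda>i. n-i"]) auto
    also have "\<dots> < (\<Sum>k\<in>{1..n}. cmod (coeff P n) * cmod z^n * (1/(E k * T^k)))"
    proof (rule sum_strict_mono)
      fix k assume k: "k \<in> {1..n}"
      have Ek: "E k > 0" using Epos[OF k] .
      have "cmod (coeff P (n-k)) * cmod z^(n-k) \<le> M^k * cmod (coeff P n) / E k * cmod z^(n-k)"
        using bnd[OF k] by (intro mult_right_mono) auto
      also have "\<dots> = M^k * (cmod (coeff P n) / E k * cmod z^(n-k))" by simp
      also have "\<dots> < (cmod z / T)^k * (cmod (coeff P n) / E k * cmod z^(n-k))"
      proof (rule mult_strict_right_mono)
        show "M^k < (cmod z / T)^k" using MzT M0 k by (intro power_strict_mono) auto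
        show "cmod (coeff P n) / E k * cmod z^(n-k) > 0" using An Ek zpos by simp
      qed
      also have "\<dots> = cmod (coeff P n) * cmod z^n * (1/(E k * T^k))"
      proof -
        have zz: "cmod z^n = cmod z^k * cmod z^(n-k)" using k by (simp add: power_add[symmetric])
        show ?thesis unfolding zz using Tpos Ek by (simp add: power_divide field_simps)
      qed
      finally show "cmod (coeff P (n-k)) * cmod z^(n-k) < cmod (coeff P n) * cmod z^n * (1/(E k * T^k))" .
    qed (use n1 in auto)
    also have "\<dots> = cmod (coeff P n) * cmod z^n"
      by (simp only: sum_distrib_left[symmetric] sumone mult_1_right)
    finally show False by simp
  qed
  show ?thesis using main unfolding T_def M_def f_def E_def F4_def p_def q_def n_def .
qed



lemma lower:
  fixes P :: "complex poly" and u v w :: real and z :: complex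
  assumes "degree P \<ge> 1" "u>0" "v>0" "w>0" "poly P z = 0"
  shows "(u*v + 2*w) / (u*v*w + w^2) *
           Min ((\<lambda>k. root k ((u*v*w + w^2) ^ degree P * u ^ xi k * (u*v) ^ (k div 2)
                   * gfib u v w k * real (degree P choose k) / gfib u v w (4 * degree P)
                   * cmod (coeff P 0 / coeff P k)))
                ` {k \<in> {1..degree P}. coeff P k \<noteq> 0})
         \<le> cmod z"
proof -
  define n where "n = degree P"
  define p where "p = u*v+2*w"
  define q where "q = u*v*w+w^2"
  define s where "s = p/q"
  define F4 where "F4 = gfib u v w (4*n)"
  define S where "S = {k \<in> {1..n}. coeff P k \<noteq> 0}"
  define E where "E = (\<lambda>k. q ^ n * u ^ xi k * (u*v) ^ (k div 2) * gfib u v w k * real (n choose k) / F4)"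
  define f where "f = (\<lambda>k. root k (E k * cmod (coeff P 0 / coeff P k)))"
  define m where "m = Min (f ` S)"
  have E_GG: "E k = q^n * GG u v w k * real (n choose k) / F4" for k
    by (simp add: E_def GG_def mult.assoc)
  have n1: "n \<ge> 1" using assms(1) by (simp add: n_def)
  have P0: "P \<noteq> 0" using n1 n_def by auto
  have An: "coeff P n \<noteq> 0" using P0 by (simp add: n_def)
  have ppos: "p > 0" and qpos: "q > 0" using assms by (simp_all add: p_def q_def add_pos_pos)
  have spos: "s > 0" using ppos qpos by (simp add: s_def)
  have F4pos: "F4 > 0" unfolding F4_def using n1 assms by (intro gfib_pos) auto
  have Epos: "E k > 0" if "k \<in> {1..n}" for k
    unfolding E_GG using that F4pos qpos GG_pos[OF assms(2-4), of k] by (intro divide_pos_pos mult_pos_pos) auto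
  have finS: "finite S" by (simp add: S_def)
  have nS: "n \<in> S" using n1 An by (simp add: S_def)
  have Ssub: "S \<subseteq> {1..n}" by (auto simp: S_def)
  have mle: "m \<le> f k" if "k \<in> S" for k unfolding m_def using that finS by (intro Min_le) auto
  have sumone: "(\<Sum>k\<in>{1..n}. s^k * E k) = 1"
  proof -
    have "(\<Sum>k\<in>{1..n}. s^k * E k) = (\<Sum>k\<in>{1..n}. real (n choose k) * GG u v w k * p^k * q^(n-k) / F4)"
    proof (rule sum.cong)
      fix k assume k: "k \<in> {1..n}"
      have qn: "q^n = q^k * q^(n-k)" using k by (simp add: power_add[symmetric])
      show "s^k * E k = real (n choose k) * GG u v w k * p^k * q^(n-k) / F4"
        unfolding E_GG s_def qn using qpos ppos F4pos by (simp add: power_divide field_simps)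
    qed simp
    also have "\<dots> = 1" using key_identity[OF assms(2-4), of n] F4pos
      by (simp add: sum_divide_distrib[symmetric] p_def q_def F4_def)
    finally show ?thesis .
  qed
  have main: "s * m \<le> cmod z"
  proof (rule ccontr)
    assume "\<not> s * m \<le> cmod z"
    hence zs: "cmod z < s * m" by simp
    have "m \<in> f ` S" unfolding m_def using finS nS by (intro Min_in) auto
    then obtain k0 where k0: "k0 \<in> S" "m = f k0" by auto
    have "0 < s * m" using zs norm_ge_zero[of z] by linarith
    hence mpos: "m > 0" using spos by (simp add: zero_less_mult_iff)
    have a0: "coeff P 0 \<noteq> 0"
    proof
      assume "coeff P 0 = 0"
      hence "f k0 = 0" by (simp add: f_def)
      thus False using mpos k0 by simp
    qed
    have bnd: "cmod (coeff P k) * m^k \<le> E k * cmod (coeff P 0)" if k: "k \<in> S" for k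
    proof -
      have k1: "k \<in> {1..n}" and ak: "coeff P k \<noteq> 0" using k by (auto simp: S_def)
      define X where "X = E k * cmod (coeff P 0 / coeff P k)"
      have X0: "X \<ge> 0" using Epos[OF k1] by (simp add: X_def)
      have "m^k \<le> (f k)^k" using mpos mle[OF k] by (intro power_mono) auto
      also have "(f k)^k = X" using k1 X0 by (simp add: f_def X_def)
      finally have "m^k \<le> E k * cmod (coeff P 0) / cmod (coeff P k)" by (simp add: X_def norm_divide)
      thus ?thesis using ak by (simp add: le_divide_eq mult.commute)
    qed
    have "poly P z = (\<Sum>i\<le>n. coeff P i * z^i)" by (simp add: poly_altdef n_def)
    also have "{..n} = insert 0 {1..n}" by auto
    finally have "coeff P 0 = - (\<Sum>k\<in>{1..n}. coeff P k * z^k)" using assms(5)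
      by (simp add: eq_neg_iff_add_eq_0)
    hence "cmod (coeff P 0) = cmod (\<Sum>k\<in>{1..n}. coeff P k * z^k)" by (metis norm_minus_cancel)
    also have "\<dots> \<le> (\<Sum>k\<in>{1..n}. cmod (coeff P k) * cmod z^k)"
      by (rule order_trans[OF norm_sum]) (simp add: norm_mult norm_power)
    also have "\<dots> = (\<Sum>k\<in>S. cmod (coeff P k) * cmod z^k)"
      by (rule sum.mono_neutral_right) (auto simp: S_def)
    also have "\<dots> < (\<Sum>k\<in>S. cmod (coeff P 0) * (s^k * E k))"
    proof (rule sum_strict_mono)
      fix k assume k: "k \<in> S"
      have k1: "k \<in> {1..n}" and ak: "coeff P k \<noteq> 0" using k by (auto simp: S_def)
      have "cmod z^k < (s*m)^k" using zs k1 by (intro power_strict_mono) auto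
      hence "cmod (coeff P k) * cmod z^k < cmod (coeff P k) * (s^k * m^k)"
        using ak by (simp add: power_mult_distrib)
      also have "\<dots> = s^k * (cmod (coeff P k) * m^k)" by (simp add: mult_ac)
      also have "\<dots> \<le> s^k * (E k * cmod (coeff P 0))"
        using bnd[OF k] spos by (intro mult_left_mono) auto
      finally show "cmod (coeff P k) * cmod z^k < cmod (coeff P 0) * (s^k * E k)"
        by (simp add: mult_ac)
    qed (use finS nS in auto)
    also have "\<dots> \<le> (\<Sum>k\<in>{1..n}. cmod (coeff P 0) * (s^k * E k))"
    proof (rule sum_mono2)
      fix k assume "k \<in> {1..n} - S"
      hence "E k > 0" using Epos by auto
      thus "0 \<le> cmod (coeff P 0) * (s^k * E k)" using spos by simp
    qed (use Ssub in auto)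
    also have "\<dots> = cmod (coeff P 0)"
      by (simp only: sum_distrib_left[symmetric] sumone mult_1_right)
    finally show False by simp
  qed
  show ?thesis using main unfolding s_def m_def f_def E_def F4_def S_def p_def q_def n_def .
qed

theorem theorem1:
  fixes P :: "complex poly" and a b c u v w :: real and z :: complex
  assumes "degree P \<ge> 1"
    and "a > 0" "b > 0" "c > 0" "u > 0" "v > 0" "w > 0"
    and "poly P z = 0"
  shows "(u*v + 2*w) / (u*v*w + w^2) *
           Min ((\<lambda>k. root k ((u*v*w + w^2) ^ degree P * u ^ xi k * (u*v) ^ (k div 2)
                   * gfib u v w k * real (degree P choose k) / gfib u v w (4 * degree P)
                   * cmod (coeff P 0 / coeff P k)))
                ` {k \<in> {1..degree P}. coeff P k \<noteq> 0})
         \<le> cmod z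
       \<and> cmod z \<le>
         (a*b*c + c^2) / (a*b + 2*c) *
           Max ((\<lambda>k. root k (gfib a b c (4 * degree P) /
                   ((a*b*c + c^2) ^ degree P * a ^ xi k * (a*b) ^ (k div 2)
                    * gfib a b c k * real (degree P choose k))
                   * cmod (coeff P (degree P - k) / coeff P (degree P))))
                ` {1..degree P})"
  using lower[OF assms(1,5-7,8)] upper[OF assms(1-4,8)] by blast

end
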